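(* Assume $-a_i+1\notin\mathbb{N}_0$ for $i\in\{1,\dots,M\}$, $-b_j\notin\mathbb{N}_0$ for $j\in\{1,\dots,N\}$, and that all denominators below are nonzero. Then for $n\in\mathbb{N}$ the Geronimus transformed orthogonal polynomials satisfy $$ {}_iT^{-1}P_n(z)=P_n(z)-\frac{Q_n(-a_i+1)}{Q_{n-1}(-a_i+1)}P_{n-1}(z),\qquad i\in\{1,\dots,M\},$$ $$T_j^{-1}P_n(z)=P_n(z)-\frac{Q_n(-b_j)}{Q_{n-1}(-b_j)}P_{n-1}(z),\qquad j\in\{1,\dots,N\},$$ $$T^{-1}P_n(z)=P_n(z-1)-\frac{\Upsilon Q_n(-1)-P_n(-1)}{\Upsilon Q_{n-1}(-1)-P_{n-1}(-1)}P_{n-1}(z-1),$$ where $\Upsilon:=\eta\,\prod_{i=1}^M(a_i-1)\big/\prod_{j=1}^N(b_j-1)$.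
   Context: Fix integers $M,N\ge0$ and parameters $\eta,a_1,\dots,a_M,b_1,\dots,b_N$. Let $w(z)=\frac{(a_1)_z\cdots(a_M)_z}{\Gamma(z+1)(b_1)_z\cdots(b_N)_z}\eta^z$, $(\alpha)_z=\Gamma(\alpha+z)/\Gamma(\alpha)$, on nodes $k\in\mathbb{N}_0$, with finite moments $\rho_n=\sum_kk^nw(k)$ and moment matrix $(\rho_{n+m})_{n,m\ge0}$ with all leading principal minors nonzero. $P_n$ is the monic polynomial of degree $n$ with $\sum_kP_n(k)P_m(k)w(k)=\delta_{n,m}H_n$, $H_n\ne0$, and $Q_n(z)=\sum_{k=0}^\infty\frac{P_n(k)w(k)}{z-k}$ is the second kind function. Inverse parameter shifts: ${}_iT^{-1}P_n$ is $P_n$ computed with $a_i$ replaced by $a_i-1$; $T_j^{-1}P_n$ with $b_j$ replaced by $b_j+1$; $T^{-1}P_n$ with every $a_i$ replaced by $a_i-1$ and every $b_j$ by $b_j-1$. It is assumed these shifted weights are well defined, with finite moments and nonzero Hankel determinants. *)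

theory Defs
  imports "HOL-Analysis.Analysis" "HOL-Computational_Algebra.Polynomial"
begin

definition poch :: "complex \<Rightarrow> complex \<Rightarrow> complex" where
  "poch \<alpha> z = Gamma (\<alpha> + z) / Gamma \<alpha>"

definition wt :: "complex list \<Rightarrow> complex list \<Rightarrow> complex \<Rightarrow> nat \<Rightarrow> complex" where
  "wt as bs \<eta> k =
     prod_list (map (\<lambda>a. poch a (of_nat k)) as) /
     (Gamma (of_nat k + 1) * prod_list (map (\<lambda>b. poch b (of_nat k)) bs)) * \<eta> ^ k"

definition moment :: "(nat \<Rightarrow> complex) \<Rightarrow> nat \<Rightarrow> complex" where
  "moment w n = (\<Sum>k. of_nat k ^ n * w k)"

definition hankel_det :: "(nat \<Rightarrow> complex) \<Rightarrow> nat \<Rightarrow> complex" where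
  "hankel_det w n =
     (\<Sum>p | p permutes {..<n}. of_int (sign p) * (\<Prod>i<n. moment w (i + p i)))"

definition good_weight :: "(nat \<Rightarrow> complex) \<Rightarrow> bool" where
  "good_weight w \<longleftrightarrow>
     (\<forall>n. summable (\<lambda>k. norm (of_nat k ^ n * w k))) \<and>
     (\<forall>n\<ge>1. hankel_det w n \<noteq> 0)"

definition is_MOPS :: "(nat \<Rightarrow> complex) \<Rightarrow> (nat \<Rightarrow> complex poly) \<Rightarrow> bool" where
  "is_MOPS w P \<longleftrightarrow>
     (\<forall>n. degree (P n) = n \<and> lead_coeff (P n) = 1) \<and>
     (\<exists>H. (\<forall>n. H n \<noteq> 0) \<and>
        (\<forall>n m. (\<Sum>k. poly (P n) (of_nat k) * poly (P m) (of_nat k) * w k)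
                 = (if n = m then H n else 0)))"

definition OP :: "(nat \<Rightarrow> complex) \<Rightarrow> nat \<Rightarrow> complex poly" where
  "OP w = (THE P. is_MOPS w P)"

definition Qfun :: "(nat \<Rightarrow> complex) \<Rightarrow> nat \<Rightarrow> complex \<Rightarrow> complex" where
  "Qfun w n z = (\<Sum>k. poly (OP w n) (of_nat k) * w k / (z - of_nat k))"

end

theory Submission imports Defs "Jordan_Normal_Form.Determinant" begin

lemma hankel_det_jnf: "hankel_det w n = det (mat n n (\<lambda>(i,j). moment w (i+j)))"
  unfolding hankel_det_def det_def
  by (auto simp: atLeast0LessThan intro!: sum.cong prod.cong simp: permutes_in_image)

lemma hankel_kernel:
  assumes "\<forall>i<n. (\<Sum>l<n. moment w (i+l) * v l) = 0" "l0 < n" "v l0 \<noteq> 0"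
  shows "hankel_det w n = 0"
proof -
  let ?A = "mat n n (\<lambda>(i,j). moment w (i+j))"
  let ?v = "vec n v"
  have "?A *\<^sub>v ?v = 0\<^sub>v n"
    using assms(1) by (auto simp: scalar_prod_def atLeast0LessThan intro!: eq_vecI)
  moreover have "?v \<noteq> 0\<^sub>v n"
  proof
    assume "?v = 0\<^sub>v n"
    hence "?v $ l0 = 0\<^sub>v n $ l0" by simp
    thus False using assms(2,3) by simp
  qed
  ultimately have "\<exists>u. u \<in> carrier_vec n \<and> u \<noteq> 0\<^sub>v n \<and> ?A *\<^sub>v u = 0\<^sub>v n"
    by (intro exI[of _ ?v]) auto
  hence "det ?A = 0"
    by (subst det_0_iff_vec_prod_zero[of ?A n]) auto
  thus ?thesis by (simp add: hankel_det_jnf)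
qed

definition ip :: "(nat \<Rightarrow> complex) \<Rightarrow> complex poly \<Rightarrow> complex poly \<Rightarrow> complex" where
  "ip w p q = (\<Sum>k. poly p (of_nat k) * poly q (of_nat k) * w k)"

definition summ :: "(nat \<Rightarrow> complex) \<Rightarrow> bool" where
  "summ w \<longleftrightarrow> (\<forall>n. summable (\<lambda>k. norm (of_nat k ^ n * w k)))"

lemma summable_poly_w:
  assumes "summ w" shows "summable (\<lambda>k. poly p (of_nat k) * w k)"
proof -
  have eq: "(\<lambda>k. poly p (of_nat k) * w k) = (\<lambda>k. \<Sum>i\<le>degree p. coeff p i * (of_nat k ^ i * w k))"
    by (rule ext, unfold poly_altdef sum_distrib_right) (simp only: mult.assoc)
  show ?thesis unfolding eq
  proof (intro summable_sum summable_mult)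
    fix i show "summable (\<lambda>k. of_nat k ^ i * w k)"
      using assms unfolding summ_def by (blast intro: summable_norm_cancel)
  qed
qed

lemma summable_ip:
  assumes "summ w" shows "summable (\<lambda>k. poly p (of_nat k) * poly q (of_nat k) * w k)"
  using summable_poly_w[OF assms, of "p*q"] by simp

lemma ip_add_left: assumes "summ w" shows "ip w (p + q) r = ip w p r + ip w q r"
proof -
  have "(\<lambda>k. poly (p + q) (of_nat k) * poly r (of_nat k) * w k) =
        (\<lambda>k. poly p (of_nat k) * poly r (of_nat k) * w k + poly q (of_nat k) * poly r (of_nat k) * w k)"
    by (rule ext) (simp only: poly_add distrib_right)
  thus ?thesis unfolding ip_def
    by (simp only: suminf_add[OF summable_ip[OF assms, of p r] summable_ip[OF assms, of q r]])
qed

lemma ip_diff_left: assumes "summ w" shows "ip w (p - q) r = ip w p r - ip w q r"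
proof -
  have "(\<lambda>k. poly (p - q) (of_nat k) * poly r (of_nat k) * w k) =
        (\<lambda>k. poly p (of_nat k) * poly r (of_nat k) * w k - poly q (of_nat k) * poly r (of_nat k) * w k)"
    by (rule ext) (simp only: poly_diff left_diff_distrib)
  thus ?thesis unfolding ip_def
    by (simp only: suminf_diff[OF summable_ip[OF assms, of p r] summable_ip[OF assms, of q r]])
qed

lemma ip_smult_left: assumes "summ w" shows "ip w (Polynomial.smult c p) r = c * ip w p r"
  unfolding ip_def
  by (subst suminf_mult[OF summable_ip[OF assms], symmetric]) (auto simp: algebra_simps)

lemma ip_sym: "ip w p q = ip w q p"
  unfolding ip_def by (simp add: mult.commute mult.left_commute)

lemma ip_sum_left:
  assumes "summ w" "finite A"
  shows "ip w (\<Sum>j\<in>A. f j) r = (\<Sum>j\<in>A. ip w (f j) r)"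
  using assms(2)
proof (induction A rule: finite_induct)
  case empty
  then show ?case by (simp add: ip_def)
next
  case (insert x F)
  then show ?case by (simp only: sum.insert[OF insert.hyps(1,2)] ip_add_left[OF assms(1)])
qed

lemma ip_lin_left:
  assumes "summ w" "finite A"
  shows "ip w (\<Sum>j\<in>A. Polynomial.smult (c j) (f j)) r = (\<Sum>j\<in>A. c j * ip w (f j) r)"
  by (simp add: ip_sum_left[OF assms] ip_smult_left[OF assms(1)])

lemma ip_lin_right:
  assumes "summ w" "finite A"
  shows "ip w r (\<Sum>j\<in>A. Polynomial.smult (c j) (f j)) = (\<Sum>j\<in>A. c j * ip w r (f j))"
proof -
  have "ip w r (\<Sum>j\<in>A. Polynomial.smult (c j) (f j)) = ip w (\<Sum>j\<in>A. Polynomial.smult (c j) (f j)) r" by (rule ip_sym)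
  also have "\<dots> = (\<Sum>j\<in>A. c j * ip w (f j) r)" by (rule ip_lin_left[OF assms])
  also have "\<dots> = (\<Sum>j\<in>A. c j * ip w r (f j))" by (rule sum.cong[OF refl]) (metis ip_sym)
  finally show ?thesis .
qed

lemma monic_degI:
  fixes p :: "complex poly"
  assumes "\<forall>i>m. coeff p i = 0" "coeff p m = 1"
  shows "degree p = m \<and> lead_coeff p = 1"
proof -
  have "degree p \<le> m" using assms(1) by (simp add: degree_le)
  moreover have "m \<le> degree p" using assms(2) by (intro le_degree) simp
  ultimately show ?thesis using assms(2) by simp
qed

lemma monic_deg0:
  assumes "degree (q :: complex poly) = 0" "lead_coeff q = 1" shows "q = 1"
proof -
  have "q = [:coeff q 0:]" using degree_0_id[OF assms(1)] by simp
  also have "coeff q 0 = 1" using assms by simp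
  finally show ?thesis by simp
qed

lemma expand:
  fixes p :: "complex poly"
  assumes "\<forall>j\<le>n. degree (P j) = j \<and> lead_coeff (P j) = 1" "degree p \<le> n"
  shows "\<exists>c. p = (\<Sum>j\<le>n. Polynomial.smult (c j) (P j))"
  using assms
proof (induction n arbitrary: p)
  case 0
  hence "P 0 = 1" using monic_deg0 by auto
  moreover have "p = [:coeff p 0:]" using 0 degree_0_id[of p] by simp
  ultimately show ?case by (intro exI[of _ "\<lambda>_. coeff p 0"]) simp
next
  case (Suc n)
  define q where "q = p - Polynomial.smult (coeff p (Suc n)) (P (Suc n))"
  have "\<forall>i>n. coeff q i = 0"
  proof (intro allI impI)
    fix i assume "i > n"
    show "coeff q i = 0"
    proof (cases "i = Suc n")
      case True
      have l: "coeff (P (Suc n)) (Suc n) = 1" using Suc.prems(1) by (metis order_refl)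
      then show ?thesis using True by (simp add: q_def)
    next
      case False
      hence "i > Suc n" using \<open>i > n\<close> by simp
      then show ?thesis using Suc.prems by (simp add: q_def coeff_eq_0)
    qed
  qed
  hence "degree q \<le> n" by (simp add: degree_le)
  moreover have "\<forall>j\<le>n. degree (P j) = j \<and> lead_coeff (P j) = 1"
  proof (intro allI impI)
    fix j :: nat assume "j \<le> n" hence "j \<le> Suc n" by simp
    thus "degree (P j) = j \<and> lead_coeff (P j) = 1" using Suc.prems(1) by blast
  qed
  ultimately obtain c where c: "q = (\<Sum>j\<le>n. Polynomial.smult (c j) (P j))" using Suc.IH by blast
  define c' where "c' = c(Suc n := coeff p (Suc n))"
  have "p = q + Polynomial.smult (coeff p (Suc n)) (P (Suc n))" by (simp add: q_def)
  also have "\<dots> = (\<Sum>j\<le>Suc n. Polynomial.smult (c' j) (P j))"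
    by (simp add: c c'_def)
  finally show ?case by blast
qed

definition orth :: "(nat \<Rightarrow> complex) \<Rightarrow> complex poly \<Rightarrow> nat \<Rightarrow> bool" where
  "orth w q n \<longleftrightarrow> (\<forall>p. degree p < n \<longrightarrow> ip w q p = 0)"

lemma orth_from_family:
  assumes "summ w" "\<forall>j<n. degree (P j) = j \<and> lead_coeff (P j) = 1" "\<forall>j<n. ip w q (P j) = 0"
  shows "orth w q n"
  unfolding orth_def
proof (intro allI impI)
  fix p :: "complex poly" assume "degree p < n"
  then obtain m where m: "n = Suc m" "degree p \<le> m" by (cases n) auto
  moreover have "\<forall>j\<le>m. degree (P j) = j \<and> lead_coeff (P j) = 1" using assms(2) m(1) by (metis less_Suc_eq_le)
  ultimately obtain c where c: "p = (\<Sum>j\<le>m. Polynomial.smult (c j) (P j))" using expand[of m P p] by blast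
  show "ip w q p = 0" unfolding c using assms m
    by (simp add: ip_lin_right)
qed

lemma MOPS_fam:
  assumes "is_MOPS w P" shows "degree (P n) = n" "lead_coeff (P n) = 1"
proof -
  have "\<forall>n. degree (P n) = n \<and> lead_coeff (P n) = 1" using assms unfolding is_MOPS_def by (rule conjunct1)
  hence "degree (P n) = n \<and> lead_coeff (P n) = 1" by (rule spec)
  thus "degree (P n) = n" "lead_coeff (P n) = 1" by (rule conjunct1, rule conjunct2)
qed

lemma MOPS_ip:
  assumes "is_MOPS w P"
  shows "\<exists>H. (\<forall>n. H n \<noteq> 0) \<and> (\<forall>i j. ip w (P i) (P j) = (if i = j then H i else 0))"
  using assms unfolding is_MOPS_def ip_def by (rule conjunct2)

lemma MOPS_orth:
  assumes "summ w" "is_MOPS w P"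
  shows "orth w (P n) n"
proof -
  obtain H where H0: "\<forall>n. H n \<noteq> 0" and H1: "\<forall>i j. ip w (P i) (P j) = (if i = j then H i else 0)"
    using MOPS_ip[OF assms(2)] by (elim exE conjE)
  have H: "\<And>i j. ip w (P i) (P j) = (if i = j then H i else 0)" using H1 by simp
  have fam: "\<forall>j<n. degree (P j) = j \<and> lead_coeff (P j) = 1" using MOPS_fam[OF assms(2)] by simp
  have o: "\<forall>j<n. ip w (P n) (P j) = 0"
  proof (intro allI impI)
    fix j assume "j < n" hence "n \<noteq> j" by simp
    thus "ip w (P n) (P j) = 0" by (simp only: H if_not_P if_False)
  qed
  show ?thesis by (rule orth_from_family[OF assms(1) fam o])
qed

lemma MOPS_char:
  assumes "summ w" "is_MOPS w P" "degree q = n" "lead_coeff q = 1" "orth w q n"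
  shows "q = P n"
proof (cases n)
  case 0
  have "P 0 = 1" using MOPS_fam[OF assms(2), of 0] monic_deg0 by simp
  moreover have "q = 1" using assms(3,4) 0 monic_deg0 by simp
  ultimately show ?thesis using 0 by simp
next
  case (Suc m)
  obtain H where H0: "\<forall>n. H n \<noteq> 0" and H1: "\<forall>i j. ip w (P i) (P j) = (if i = j then H i else 0)"
    using MOPS_ip[OF assms(2)] by (elim exE conjE)
  have H: "\<And>i j. ip w (P i) (P j) = (if i = j then H i else 0)" using H1 by simp
  define d where "d = q - P n"
  have "\<forall>i>m. coeff d i = 0"
  proof (intro allI impI)
    fix i assume "i > m"
    show "coeff d i = 0"
    proof (cases "i = n")
      case True
      have "coeff (P n) n = 1" using MOPS_fam[OF assms(2), of n] by simp
      then show ?thesis using True assms(3,4) by (simp add: d_def)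
    next
      case False
      hence "i > n" using \<open>i > m\<close> Suc by simp
      then show ?thesis using MOPS_fam(1)[OF assms(2), of n] assms(3) by (simp add: d_def coeff_eq_0)
    qed
  qed
  hence "degree d \<le> m" by (simp add: degree_le)
  moreover have "\<forall>j\<le>m. degree (P j) = j \<and> lead_coeff (P j) = 1" using MOPS_fam[OF assms(2)] by simp
  ultimately have "\<exists>c. d = (\<Sum>j\<le>m. Polynomial.smult (c j) (P j))" by (rule expand[rotated])
  then obtain c where c: "d = (\<Sum>j\<le>m. Polynomial.smult (c j) (P j))" by (elim exE)
  have "c i = 0" if "i \<le> m" for i
  proof -
    have "ip w d (P i) = ip w q (P i) - ip w (P n) (P i)" by (simp add: d_def ip_diff_left[OF assms(1)])
    also have "\<dots> = 0"
    proof -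
      have "degree (P i) < n" using MOPS_fam(1)[OF assms(2), of i] that Suc by simp
      hence o1: "ip w q (P i) = 0" using assms(5) unfolding orth_def by blast
      have "n \<noteq> i" using that Suc by simp
      hence o2: "ip w (P n) (P i) = 0" by (simp only: H if_not_P if_False)
      show ?thesis by (simp only: o1 o2 diff_zero)
    qed
    finally have "ip w d (P i) = 0" .
    moreover have "ip w d (P i) = (\<Sum>j\<le>m. c j * (if j = i then H j else 0))"
      unfolding c by (simp only: ip_lin_left[OF assms(1)] H finite_atMost)
    moreover have "\<dots> = (\<Sum>j\<le>m. (if j = i then c j * H j else 0))"
      by (rule sum.cong) auto
    moreover have "\<dots> = c i * H i" using that by (simp add: sum.delta)
    ultimately show ?thesis using H0 by simp
  qed
  hence "d = 0" unfolding c by simp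
  thus ?thesis by (simp add: d_def)
qed

lemma OP_eq:
  assumes "summ w" "is_MOPS w P"
  shows "OP w = P"
proof -
  have uniq: "R = P" if R: "is_MOPS w R" for R
  proof
    fix n
    show "R n = P n"
      by (rule MOPS_char[OF assms MOPS_fam[OF R] MOPS_orth[OF assms(1) R]])
  qed
  show ?thesis unfolding OP_def
    by (rule the_equality[of "is_MOPS w" P, OF assms(2) uniq])
qed


lemma summable_pow_w: "summ w \<Longrightarrow> summable (\<lambda>k. of_nat k ^ j * w k)"
  unfolding summ_def by (blast intro: summable_norm_cancel)

lemma ip_monom:
  assumes "summ w"
  shows "ip w p (Polynomial.monom 1 i) = (\<Sum>l\<le>degree p. coeff p l * moment w (i + l))"
proof -
  have eq: "\<And>k. poly p (of_nat k) * poly (Polynomial.monom 1 i) (of_nat k) * w k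
        = (\<Sum>l\<le>degree p. coeff p l * (of_nat k ^ (i + l) * w k))"
    unfolding poly_altdef[of p] poly_monom sum_distrib_right
    by (rule sum.cong[OF refl]) (simp add: power_add mult_ac)
  have "ip w p (Polynomial.monom 1 i) = (\<Sum>k. \<Sum>l\<le>degree p. coeff p l * (of_nat k ^ (i + l) * w k))"
    unfolding ip_def eq ..
  also have "\<dots> = (\<Sum>l\<le>degree p. \<Sum>k. coeff p l * (of_nat k ^ (i + l) * w k))"
    by (rule suminf_sum) (intro summable_mult summable_pow_w[OF assms])
  also have "\<dots> = (\<Sum>l\<le>degree p. coeff p l * moment w (i + l))"
    unfolding moment_def by (rule sum.cong[OF refl]) (rule suminf_mult[OF summable_pow_w[OF assms]])
  finally show ?thesis .
qed

lemma exists_step: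
  assumes sw: "summ w" and hk: "\<forall>n\<ge>1. hankel_det w n \<noteq> 0"
  shows "\<exists>p. degree p = m \<and> lead_coeff p = 1 \<and> orth w p m \<and> ip w p p \<noteq> 0"
proof (induction m rule: less_induct)
  case (less m)
  have "\<forall>j. \<exists>p. j < m \<longrightarrow> (degree p = j \<and> lead_coeff p = 1 \<and> orth w p j \<and> ip w p p \<noteq> 0)"
  proof
    fix j
    show "\<exists>p. j < m \<longrightarrow> (degree p = j \<and> lead_coeff p = 1 \<and> orth w p j \<and> ip w p p \<noteq> 0)"
    proof (cases "j < m")
      case True
      then obtain p where "degree p = j \<and> lead_coeff p = 1 \<and> orth w p j \<and> ip w p p \<noteq> 0"
        using less.IH[OF True] by (elim exE)
      then show ?thesis by (intro exI[of _ p] impI)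
    next
      case False
      then show ?thesis by simp
    qed
  qed
  from choice[OF this] obtain P where
    P: "\<forall>j. j < m \<longrightarrow> (degree (P j) = j \<and> lead_coeff (P j) = 1 \<and> orth w (P j) j \<and> ip w (P j) (P j) \<noteq> 0)"
    by (elim exE)
  have Pdeg: "degree (P j) = j" if "j < m" for j using P that by simp
  have Plc: "lead_coeff (P j) = 1" if "j < m" for j by (rule conjunct1[OF conjunct2[OF P[rule_format, OF that]]])
  have Porth: "orth w (P j) j" if "j < m" for j using P that by simp
  have Pnz: "ip w (P j) (P j) \<noteq> 0" if "j < m" for j using P that by simp
  have fam: "\<forall>j<m. degree (P j) = j \<and> lead_coeff (P j) = 1" using Pdeg Plc by simp
  have pair: "ip w (P j) (P i) = 0" if "i < m" "j < m" "i \<noteq> j" for i j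
  proof (cases "i < j")
    case True
    have "degree (P i) < j" using Pdeg[OF that(1)] True by simp
    then show ?thesis using Porth[OF that(2)] unfolding orth_def by blast
  next
    case False
    hence "j < i" using that(3) by simp
    hence "degree (P j) < i" using Pdeg[OF that(2)] by simp
    hence "ip w (P i) (P j) = 0" using Porth[OF that(1)] unfolding orth_def by blast
    then show ?thesis by (simp add: ip_sym)
  qed
  define cf where "cf j = ip w (Polynomial.monom 1 m) (P j) / ip w (P j) (P j)" for j
  define S where "S = (\<Sum>j<m. Polynomial.smult (cf j) (P j))"
  define p where "p = Polynomial.monom 1 m - S"
  have cS: "coeff S i = 0" if "m \<le> i" for i
  proof -
    have "coeff S i = (\<Sum>j<m. cf j * coeff (P j) i)" unfolding S_def by (simp add: coeff_sum)
    also have "\<dots> = 0"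
    proof (rule sum.neutral, rule ballI)
      fix j assume "j \<in> {..<m}"
      hence "degree (P j) < i" using Pdeg that by simp
      thus "cf j * coeff (P j) i = 0" by (simp add: coeff_eq_0)
    qed
    finally show ?thesis .
  qed
  have pm: "degree p = m \<and> lead_coeff p = 1"
  proof (rule monic_degI)
    show "\<forall>i>m. coeff p i = 0" using cS by (simp add: p_def coeff_monom)
    show "coeff p m = 1" using cS[of m] by (simp add: p_def coeff_monom)
  qed
  have ipP: "ip w p (P i) = 0" if "i < m" for i
  proof -
    have "(\<Sum>j<m. cf j * ip w (P j) (P i)) = (\<Sum>j<m. if j = i then cf j * ip w (P i) (P i) else 0)"
    proof (rule sum.cong[OF refl])
      fix j assume "j \<in> {..<m}"
      thus "cf j * ip w (P j) (P i) = (if j = i then cf j * ip w (P i) (P i) else 0)"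
        using pair[of i j] that by (cases "j = i") simp_all
    qed
    also have "\<dots> = cf i * ip w (P i) (P i)" using that by (simp add: sum.delta)
    also have "\<dots> = ip w (Polynomial.monom 1 m) (P i)" using Pnz[OF that] by (simp add: cf_def)
    finally have "ip w S (P i) = ip w (Polynomial.monom 1 m) (P i)"
      unfolding S_def by (simp only: ip_lin_left[OF sw finite_lessThan])
    thus ?thesis unfolding p_def by (simp add: ip_diff_left[OF sw])
  qed
  have orthp: "orth w p m" by (rule orth_from_family[OF sw fam]) (simp add: ipP)
  have "ip w p p \<noteq> 0"
  proof
    assume pp: "ip w p p = 0"
    have z: "ip w p (Polynomial.monom 1 l) = 0" if "l \<le> m" for l
    proof (cases "l < m")
      case True
      hence "degree (Polynomial.monom (1::complex) l) < m" by (simp add: degree_monom_eq)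
      then show ?thesis using orthp unfolding orth_def by blast
    next
      case False
      hence l: "l = m" using that by simp
      have "ip w p S = (\<Sum>j<m. cf j * ip w p (P j))"
        unfolding S_def by (rule ip_lin_right[OF sw finite_lessThan])
      also have "\<dots> = 0" by (rule sum.neutral) (simp add: ipP)
      finally have "ip w p S = 0" .
      have "Polynomial.monom 1 m = p + S" by (simp add: p_def)
      hence "ip w p (Polynomial.monom 1 m) = ip w (p + S) p" by (simp add: ip_sym)
      also have "\<dots> = ip w p p + ip w S p" by (rule ip_add_left[OF sw])
      also have "\<dots> = 0" using pp \<open>ip w p S = 0\<close> by (simp add: ip_sym)
      finally show ?thesis using l by simp
    qed
    have "hankel_det w (Suc m) = 0"
    proof (rule hankel_kernel[of "Suc m" w "coeff p" m])
      show "\<forall>i<Suc m. (\<Sum>l<Suc m. moment w (i + l) * coeff p l) = 0"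
      proof (intro allI impI)
        fix i assume "i < Suc m"
        have "(\<Sum>l<Suc m. moment w (i + l) * coeff p l) = (\<Sum>l\<le>degree p. coeff p l * moment w (i + l))"
          using pm by (simp add: lessThan_Suc_atMost mult.commute)
        also have "\<dots> = ip w p (Polynomial.monom 1 i)" by (rule ip_monom[OF sw, symmetric])
        also have "\<dots> = 0" using z \<open>i < Suc m\<close> by simp
        finally show "(\<Sum>l<Suc m. moment w (i + l) * coeff p l) = 0" .
      qed
      show "m < Suc m" by simp
      show "coeff p m \<noteq> 0" using pm by (metis one_neq_zero)
    qed
    thus False using hk by simp
  qed
  thus ?case using pm orthp by blast
qed

lemma good_summ: "good_weight w \<Longrightarrow> summ w"
  unfolding good_weight_def summ_def by (rule conjunct1)

lemma exists_MOPS: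
  assumes "good_weight w"
  shows "\<exists>P. is_MOPS w P"
proof -
  have sw: "summ w" by (rule good_summ[OF assms])
  have hk: "\<forall>n\<ge>1. hankel_det w n \<noteq> 0" using assms unfolding good_weight_def by (rule conjunct2)
  define P where "P m = (SOME p. degree p = m \<and> lead_coeff p = 1 \<and> orth w p m \<and> ip w p p \<noteq> 0)" for m
  have PP: "degree (P m) = m \<and> lead_coeff (P m) = 1 \<and> orth w (P m) m \<and> ip w (P m) (P m) \<noteq> 0" for m
    unfolding P_def by (rule someI_ex[OF exists_step[OF sw hk]])
  have ipP: "ip w (P n) (P m) = (if n = m then ip w (P n) (P n) else 0)" for n m
  proof (cases "n = m")
    case True then show ?thesis by simp
  next
    case False
    show ?thesis
    proof (cases "m < n")
      case True
      have "degree (P m) < n" using PP[of m] True by simp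
      hence "ip w (P n) (P m) = 0" using PP[of n] unfolding orth_def by blast
      then show ?thesis using False by simp
    next
      case F2: False
      hence "n < m" using False by simp
      hence "degree (P n) < m" using PP[of n] by simp
      hence "ip w (P m) (P n) = 0" using PP[of m] unfolding orth_def by blast
      then show ?thesis using False by (simp add: ip_sym)
    qed
  qed
  have "is_MOPS w P"
    unfolding is_MOPS_def
  proof (intro conjI allI exI[of _ "\<lambda>n. ip w (P n) (P n)"])
    fix n show "degree (P n) = n" using PP[of n] by simp
    fix n show "lead_coeff (P n) = 1" by (rule conjunct1[OF conjunct2[OF PP[of n]]])
    fix n show "ip w (P n) (P n) \<noteq> 0" using PP[of n] by simp
    fix n m show "(\<Sum>k. poly (P n) (of_nat k) * poly (P m) (of_nat k) * w k) =
      (if n = m then ip w (P n) (P n) else 0)" using ipP[of n m] unfolding ip_def .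
  qed
  thus ?thesis by blast
qed


lemma OP_MOPS: "good_weight w \<Longrightarrow> is_MOPS w (OP w)"
proof -
  assume g: "good_weight w"
  obtain P where P: "is_MOPS w P" using exists_MOPS[OF g] by (elim exE)
  have "OP w = P" by (rule OP_eq[OF good_summ[OF g] P])
  thus ?thesis using P by simp
qed

lemma OP_char:
  assumes g: "good_weight w" and "degree q = n" "lead_coeff q = 1" "orth w q n"
  shows "OP w n = q"
  using MOPS_char[OF good_summ[OF g] OP_MOPS[OF g] assms(2-4)] by simp

lemma monic_sub:
  fixes A B :: "complex poly"
  assumes "degree A = n" "lead_coeff A = 1" "degree B < n"
  shows "degree (A - Polynomial.smult c B) = n \<and> lead_coeff (A - Polynomial.smult c B) = 1"
proof (rule monic_degI)
  show "\<forall>i>n. coeff (A - Polynomial.smult c B) i = 0"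
    using assms by (simp add: coeff_eq_0)
  have "coeff B n = 0" using assms(3) by (simp add: coeff_eq_0)
  moreover have "coeff A n = 1" using assms(1,2) by simp
  ultimately show "coeff (A - Polynomial.smult c B) n = 1" by simp
qed

lemma ip_zero_right: "ip w p 0 = 0"
  unfolding ip_def by simp

lemma orth_synth:
  fixes p :: "complex poly"
  assumes sw: "summ w" and o1: "orth w A n" and o2: "orth w B (n - 1)" and dp: "degree p < n"
  shows "ip w (A - Polynomial.smult c B) (synthetic_div p z) = 0"
proof (cases "degree p = 0")
  case True
  hence "synthetic_div p z = 0" by (simp add: synthetic_div_eq_0_iff)
  thus ?thesis by (simp add: ip_zero_right)
next
  case False
  have d: "degree (synthetic_div p z) < n - 1" using False dp by (simp add: degree_synthetic_div)
  hence "degree (synthetic_div p z) < n" by simp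
  hence "ip w A (synthetic_div p z) = 0" using o1 unfolding orth_def by blast
  moreover have "ip w B (synthetic_div p z) = 0" using o2 d unfolding orth_def by blast
  ultimately show ?thesis by (simp add: ip_diff_left[OF sw] ip_smult_left[OF sw])
qed

lemma geronimus:
  fixes \<zeta> c0 :: complex
  assumes gw: "good_weight w" and sw': "summ w'" and n: "n \<ge> 1"
    and rel: "\<And>k. w' k * (of_nat k - \<zeta>) = c0 * w k"
    and zn: "\<And>k. \<zeta> \<noteq> of_nat k"
    and den: "Qfun w (n-1) \<zeta> \<noteq> 0"
  shows "orth w' (OP w n - Polynomial.smult (Qfun w n \<zeta> / Qfun w (n-1) \<zeta>) (OP w (n-1))) n"
proof -
  have sw: "summ w" by (rule good_summ[OF gw])
  have M: "is_MOPS w (OP w)" by (rule OP_MOPS[OF gw])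
  define c where "c = Qfun w n \<zeta> / Qfun w (n-1) \<zeta>"
  define cand where "cand = OP w n - Polynomial.smult c (OP w (n-1))"
  have w'eq: "w' k = c0 * w k / (of_nat k - \<zeta>)" for k
  proof -
    have "of_nat k - \<zeta> \<noteq> 0" using zn[of k] by simp
    thus ?thesis using rel[of k] by (simp add: field_simps)
  qed
  have key1: "(\<Sum>k. poly (OP w j) (of_nat k) * w' k) = - c0 * Qfun w j \<zeta>" for j
  proof (cases "c0 = 0")
    case True
    then show ?thesis by (simp add: w'eq)
  next
    case False
    have t: "poly (OP w j) (of_nat k) * w k / (\<zeta> - of_nat k) = (- 1 / c0) * (poly (OP w j) (of_nat k) * w' k)" for k
    proof -
      have "of_nat k - \<zeta> \<noteq> 0" "\<zeta> - of_nat k \<noteq> 0" using zn[of k] by auto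
      thus ?thesis using False by (simp add: w'eq field_simps)
    qed
    have sm: "summable (\<lambda>k. poly (OP w j) (of_nat k) * w' k)" by (rule summable_poly_w[OF sw'])
    have "Qfun w j \<zeta> = (\<Sum>k. (- 1 / c0) * (poly (OP w j) (of_nat k) * w' k))"
      unfolding Qfun_def by (simp only: t)
    also have "\<dots> = (- 1 / c0) * (\<Sum>k. poly (OP w j) (of_nat k) * w' k)"
      by (rule suminf_mult[OF sm])
    finally show ?thesis using False by (simp add: field_simps)
  qed
  have key2: "(\<Sum>k. poly cand (of_nat k) * w' k) = 0"
  proof -
    have "(\<Sum>k. poly cand (of_nat k) * w' k)
        = (\<Sum>k. poly (OP w n) (of_nat k) * w' k - c * (poly (OP w (n-1)) (of_nat k) * w' k))"
      unfolding cand_def by (simp add: algebra_simps)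
    also have "\<dots> = (\<Sum>k. poly (OP w n) (of_nat k) * w' k) - c * (\<Sum>k. poly (OP w (n-1)) (of_nat k) * w' k)"
      by (subst suminf_diff[OF summable_poly_w[OF sw'] summable_mult[OF summable_poly_w[OF sw']], symmetric])
         (simp add: suminf_mult[OF summable_poly_w[OF sw']])
    also have "\<dots> = - c0 * Qfun w n \<zeta> + c * c0 * Qfun w (n-1) \<zeta>" by (simp add: key1)
    also have "\<dots> = 0" using den by (simp add: c_def)
    finally show ?thesis .
  qed
  have "ip w' cand p = 0" if dp: "degree p < n" for p
  proof -
    define sd where "sd = synthetic_div p \<zeta>"
    have peq: "poly p x = (x - \<zeta>) * poly sd x + poly p \<zeta>" for x
    proof -
      have "poly p x = poly ([:-\<zeta>, 1:] * synthetic_div p \<zeta> + [:poly p \<zeta>:]) x"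
        by (simp only: synthetic_div_correct')
      thus ?thesis by (simp add: sd_def algebra_simps)
    qed
    have o: "ip w cand sd = 0" unfolding cand_def sd_def
      by (rule orth_synth[OF sw MOPS_orth[OF sw M] MOPS_orth[OF sw M] dp])
    have teq: "poly cand (of_nat k) * poly p (of_nat k) * w' k
        = c0 * (poly cand (of_nat k) * poly sd (of_nat k) * w k) + poly p \<zeta> * (poly cand (of_nat k) * w' k)" for k
    proof -
      have "poly cand (of_nat k) * poly p (of_nat k) * w' k
          = poly cand (of_nat k) * poly sd (of_nat k) * (w' k * (of_nat k - \<zeta>)) + poly p \<zeta> * (poly cand (of_nat k) * w' k)"
        by (subst peq[of "of_nat k"]) (simp add: algebra_simps)
      thus ?thesis unfolding rel by (simp add: algebra_simps)
    qed
    have "ip w' cand p = (\<Sum>k. c0 * (poly cand (of_nat k) * poly sd (of_nat k) * w k) + poly p \<zeta> * (poly cand (of_nat k) * w' k))"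
      unfolding ip_def by (simp only: teq)
    also have "\<dots> = c0 * ip w cand sd + poly p \<zeta> * (\<Sum>k. poly cand (of_nat k) * w' k)"
      unfolding ip_def
      by (subst suminf_add[OF summable_mult[OF summable_ip[OF sw]] summable_mult[OF summable_poly_w[OF sw']], symmetric])
         (simp add: suminf_mult[OF summable_ip[OF sw]] suminf_mult[OF summable_poly_w[OF sw']])
    also have "\<dots> = 0" by (simp add: o key2)
    finally show ?thesis .
  qed
  thus ?thesis unfolding orth_def cand_def c_def by blast
qed


lemma of_nat_p1_nz: "(of_nat k + 1 :: complex) \<noteq> 0"
proof -
  have "(of_nat k + 1 :: complex) = of_nat (Suc k)" by simp
  also have "\<dots> \<noteq> 0" by (rule of_nat_neq_0)
  finally show ?thesis .
qed

lemma m1_nz: "(- 1 - of_nat k :: complex) \<noteq> 0"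
proof -
  have "(- 1 - of_nat k :: complex) = - of_nat (Suc k)" by simp
  also have "\<dots> \<noteq> 0" using of_nat_neq_0[of k] by (simp only: neg_equal_0_iff_equal not_False_eq_True)
  finally show ?thesis .
qed

lemma abs_summable_poly_w:
  assumes sw: "summ w" shows "summable (\<lambda>k. norm (poly p (of_nat k) * w k))"
proof (rule summable_comparison_test')
  show "summable (\<lambda>k. \<Sum>i\<le>degree p. norm (coeff p i) * norm (of_nat k ^ i * w k))"
    using sw unfolding summ_def by (intro summable_sum summable_mult) blast
  fix k :: nat
  have "poly p (of_nat k) * w k = (\<Sum>i\<le>degree p. coeff p i * (of_nat k ^ i * w k))"
    unfolding poly_altdef[of p] sum_distrib_right by (simp only: mult.assoc)
  hence "norm (poly p (of_nat k) * w k) \<le> (\<Sum>i\<le>degree p. norm (coeff p i * (of_nat k ^ i * w k)))"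
    by (simp only: norm_sum)
  also have "\<dots> = (\<Sum>i\<le>degree p. norm (coeff p i) * norm (of_nat k ^ i * w k))"
    by (simp only: norm_mult)
  finally show "norm (norm (poly p (of_nat k) * w k)) \<le> (\<Sum>i\<le>degree p. norm (coeff p i) * norm (of_nat k ^ i * w k))"
    by simp
qed

lemma summable_Q1:
  assumes sw: "summ w" shows "summable (\<lambda>k. poly p (of_nat k) * w k / (- 1 - of_nat k))"
proof (rule summable_comparison_test'[OF abs_summable_poly_w[OF sw, of p]])
  fix k :: nat
  have "norm (- 1 - (of_nat k :: complex)) = 1 + real k"
  proof -
    have "(- 1 - (of_nat k :: complex)) = - of_real (1 + real k)" by simp
    thus ?thesis by (simp only: norm_minus_cancel norm_of_real)
  qed
  hence "norm (- 1 - (of_nat k :: complex)) \<ge> 1" by simp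
  hence "norm (poly p (of_nat k) * w k) / norm (- 1 - (of_nat k :: complex)) \<le> norm (poly p (of_nat k) * w k) / 1"
    by (intro divide_left_mono) auto
  thus "norm (poly p (of_nat k) * w k / (- 1 - of_nat k)) \<le> norm (poly p (of_nat k) * w k)"
    by (simp add: norm_divide)
qed

lemma geronimus3:
  fixes U :: complex
  assumes gw: "good_weight w" and sw': "summ w'" and n: "n \<ge> 1"
    and w0: "w' 0 = 1"
    and rel: "\<And>k. w' (Suc k) * (of_nat k + 1) = U * w k"
    and den: "U * Qfun w (n-1) (-1) - poly (OP w (n-1)) (-1) \<noteq> 0"
  shows "orth w' (pcompose (OP w n) [:-1,1:]
     - Polynomial.smult ((U * Qfun w n (-1) - poly (OP w n) (-1)) / (U * Qfun w (n-1) (-1) - poly (OP w (n-1)) (-1)))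
         (pcompose (OP w (n-1)) [:-1,1:])) n"
proof -
  have sw: "summ w" by (rule good_summ[OF gw])
  have M: "is_MOPS w (OP w)" by (rule OP_MOPS[OF gw])
  define c where "c = (U * Qfun w n (-1) - poly (OP w n) (-1)) / (U * Qfun w (n-1) (-1) - poly (OP w (n-1)) (-1))"
  define cand where "cand = OP w n - Polynomial.smult c (OP w (n-1))"
  define cand3 where "cand3 = pcompose (OP w n) [:-1,1:] - Polynomial.smult c (pcompose (OP w (n-1)) [:-1,1:])"
  have c3: "poly cand3 x = poly cand (x - 1)" for x
    unfolding cand3_def cand_def by (simp add: poly_pcompose)
  have w'eq: "w' (Suc k) = U * w k / (of_nat k + 1)" for k
  proof -
    have "(of_nat k + 1 :: complex) \<noteq> 0" by (rule of_nat_p1_nz)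
    thus ?thesis using rel[of k] by (simp add: field_simps)
  qed
  have shift_sum: "summable (\<lambda>k. poly q (of_nat k) * w' (Suc k))" for q
  proof -
    have "summable (\<lambda>k. poly (pcompose q [:-1,1:]) (of_nat (k + 1)) * w' (k + 1))"
      by (rule summable_ignore_initial_segment[OF summable_poly_w[OF sw', of "pcompose q [:-1,1:]"]])
    thus ?thesis by (simp add: poly_pcompose)
  qed
  have key1: "(\<Sum>k. poly (OP w j) (of_nat k) * w' (Suc k)) = - U * Qfun w j (-1)" for j
  proof -
    have t: "poly (OP w j) (of_nat k) * w' (Suc k) = (- U) * (poly (OP w j) (of_nat k) * w k / (- 1 - of_nat k))" for k
    proof -
      have nz: "(of_nat k + 1 :: complex) \<noteq> 0" by (rule of_nat_p1_nz)
      have e: "(- 1 - of_nat k :: complex) = - (of_nat k + 1)" by simp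
      have "poly (OP w j) (of_nat k) * w' (Suc k) = poly (OP w j) (of_nat k) * (U * w k / (of_nat k + 1))"
        by (simp only: w'eq)
      also have "\<dots> = (- U) * (poly (OP w j) (of_nat k) * w k / (- 1 - of_nat k))"
        using nz m1_nz[of k] by (simp add: field_simps)
      finally show ?thesis .
    qed
    have "(\<Sum>k. poly (OP w j) (of_nat k) * w' (Suc k)) = (\<Sum>k. (- U) * (poly (OP w j) (of_nat k) * w k / (- 1 - of_nat k)))"
      by (simp only: t)
    also have "\<dots> = (- U) * (\<Sum>k. poly (OP w j) (of_nat k) * w k / (- 1 - of_nat k))"
      by (rule suminf_mult[OF summable_Q1[OF sw]])
    also have "\<dots> = - U * Qfun w j (-1)" unfolding Qfun_def by simp
    finally show ?thesis .
  qed
  have key2: "(\<Sum>k. poly cand (of_nat k) * w' (Suc k)) = - U * Qfun w n (-1) + c * U * Qfun w (n-1) (-1)"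
  proof -
    have "(\<Sum>k. poly cand (of_nat k) * w' (Suc k))
        = (\<Sum>k. poly (OP w n) (of_nat k) * w' (Suc k) - c * (poly (OP w (n-1)) (of_nat k) * w' (Suc k)))"
      unfolding cand_def by (simp add: algebra_simps)
    also have "\<dots> = (\<Sum>k. poly (OP w n) (of_nat k) * w' (Suc k)) - c * (\<Sum>k. poly (OP w (n-1)) (of_nat k) * w' (Suc k))"
      by (subst suminf_diff[OF shift_sum summable_mult[OF shift_sum], symmetric])
         (simp add: suminf_mult[OF shift_sum])
    also have "\<dots> = - U * Qfun w n (-1) + c * U * Qfun w (n-1) (-1)" by (simp add: key1)
    finally show ?thesis .
  qed
  have "ip w' cand3 p = 0" if dp: "degree p < n" for p
  proof -
    define p1 where "p1 = pcompose p [:1,1:]"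
    define sd where "sd = synthetic_div p1 (-1)"
    have dp1: "degree p1 < n" using dp by (simp add: p1_def degree_pcompose)
    have p1eq: "poly p1 x = (x + 1) * poly sd x + poly p 0" for x
    proof -
      have "poly p1 x = poly ([:-(-1), 1:] * synthetic_div p1 (-1) + [:poly p1 (-1):]) x"
        by (simp only: synthetic_div_correct')
      thus ?thesis by (simp add: sd_def p1_def poly_pcompose algebra_simps)
    qed
    have pS: "poly p (of_nat (Suc k)) = (of_nat k + 1) * poly sd (of_nat k) + poly p 0" for k
    proof -
      have "poly p (of_nat (Suc k)) = poly p1 (of_nat k)" by (simp add: p1_def poly_pcompose algebra_simps)
      thus ?thesis by (simp only: p1eq)
    qed
    have o: "ip w cand sd = 0" unfolding cand_def sd_def
      by (rule orth_synth[OF sw MOPS_orth[OF sw M] MOPS_orth[OF sw M] dp1])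
    define f where "f k = poly cand3 (of_nat k) * poly p (of_nat k) * w' k" for k
    have sf: "summable f" unfolding f_def by (rule summable_ip[OF sw'])
    have fS: "f (Suc k) = U * (poly cand (of_nat k) * poly sd (of_nat k) * w k) + poly p 0 * (poly cand (of_nat k) * w' (Suc k))" for k
    proof -
      have "f (Suc k) = poly cand (of_nat k) * ((of_nat k + 1) * poly sd (of_nat k) + poly p 0) * w' (Suc k)"
        unfolding f_def c3 pS by simp
      also have "\<dots> = poly cand (of_nat k) * poly sd (of_nat k) * (w' (Suc k) * (of_nat k + 1)) + poly p 0 * (poly cand (of_nat k) * w' (Suc k))"
        by (simp add: algebra_simps)
      also have "\<dots> = U * (poly cand (of_nat k) * poly sd (of_nat k) * w k) + poly p 0 * (poly cand (of_nat k) * w' (Suc k))"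
        by (simp only: rel) (simp add: algebra_simps)
      finally show ?thesis .
    qed
    have "(\<Sum>k. f (Suc k)) = U * ip w cand sd + poly p 0 * (\<Sum>k. poly cand (of_nat k) * w' (Suc k))"
      unfolding fS ip_def
      by (subst suminf_add[OF summable_mult[OF summable_ip[OF sw]] summable_mult[OF shift_sum], symmetric])
         (simp add: suminf_mult[OF summable_ip[OF sw]] suminf_mult[OF shift_sum])
    also have "\<dots> = poly p 0 * (- U * Qfun w n (-1) + c * U * Qfun w (n-1) (-1))" by (simp add: o key2)
    finally have fs: "(\<Sum>k. f (Suc k)) = poly p 0 * (- U * Qfun w n (-1) + c * U * Qfun w (n-1) (-1))" .
    have f0: "f 0 = poly p 0 * (poly (OP w n) (-1) - c * poly (OP w (n-1)) (-1))"
      unfolding f_def c3 cand_def using w0 by simp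
    have "ip w' cand3 p = suminf f" unfolding ip_def f_def ..
    also have "\<dots> = f 0 + (\<Sum>k. f (Suc k))" using suminf_split_head[OF sf] by simp
    also have "\<dots> = poly p 0 * ((poly (OP w n) (-1) - U * Qfun w n (-1)) + c * (U * Qfun w (n-1) (-1) - poly (OP w (n-1)) (-1)))"
      unfolding f0 fs by (simp add: algebra_simps)
    also have "\<dots> = 0" using den by (simp add: c_def)
    finally show ?thesis .
  qed
  thus ?thesis unfolding orth_def cand3_def c_def by blast
qed


lemma prod_list_update:
  fixes f :: "'a \<Rightarrow> complex"
  assumes "i < length xs"
  shows "prod_list (map f (xs[i := y])) * f (xs ! i) = prod_list (map f xs) * f y"
  using assms
proof (induction xs arbitrary: i)
  case Nil
  then show ?case by simp
next
  case (Cons x xs)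
  show ?case
  proof (cases i)
    case 0
    then show ?thesis by (simp add: mult_ac)
  next
    case (Suc j)
    hence "j < length xs" using Cons.prems by simp
    hence "prod_list (map f (xs[j := y])) * f (xs ! j) = prod_list (map f xs) * f y" by (rule Cons.IH)
    then show ?thesis using Suc by (simp add: mult_ac)
  qed
qed

lemma prod_list_map_mult:
  fixes f g :: "'a \<Rightarrow> complex"
  shows "prod_list (map (\<lambda>x. f x * g x) xs) = prod_list (map f xs) * prod_list (map g xs)"
  by (induction xs) (simp_all add: mult_ac)

lemma prod_list_map_one:
  fixes f :: "'a \<Rightarrow> complex"
  shows "(\<forall>x\<in>set xs. f x = 1) \<Longrightarrow> prod_list (map f xs) = 1"
  by (induction xs) simp_all

lemma prod_list_map_nz:
  fixes f :: "'a \<Rightarrow> complex"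
  shows "(\<forall>x\<in>set xs. f x \<noteq> 0) \<Longrightarrow> prod_list (map f xs) \<noteq> 0"
  by (induction xs) simp_all

lemma np_of_Nats:
  fixes z :: complex
  assumes "z + of_nat k \<in> \<int>\<^sub>\<le>\<^sub>0"
  shows "- z \<in> \<nat>"
proof -
  obtain m where m: "z + of_nat k = - of_nat m" using assms by (elim nonpos_Ints_cases')
  have "- z = of_nat k - (z + of_nat k)" by simp
  also have "\<dots> = of_nat k + of_nat m" unfolding m by simp
  finally have "- z = of_nat (k + m)" by simp
  thus ?thesis by simp
qed

lemma a_np:
  fixes a :: complex
  assumes "1 - a \<notin> \<nat>"
  shows "a - 1 + of_nat k \<notin> \<int>\<^sub>\<le>\<^sub>0"
proof
  assume "a - 1 + of_nat k \<in> \<int>\<^sub>\<le>\<^sub>0"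
  hence "- (a - 1) \<in> \<nat>" by (rule np_of_Nats)
  thus False using assms by simp
qed

lemma b_np:
  fixes b :: complex
  assumes "- b \<notin> \<nat>"
  shows "b + of_nat k \<notin> \<int>\<^sub>\<le>\<^sub>0"
proof
  assume "b + of_nat k \<in> \<int>\<^sub>\<le>\<^sub>0"
  hence "- b \<in> \<nat>" by (rule np_of_Nats)
  thus False using assms by simp
qed

lemma b1_np:
  fixes b :: complex
  assumes "- b \<notin> \<nat>" "b \<noteq> 1"
  shows "b - 1 \<notin> \<int>\<^sub>\<le>\<^sub>0"
proof
  assume "b - 1 \<in> \<int>\<^sub>\<le>\<^sub>0"
  then obtain m where m: "b - 1 = - of_nat m" by (elim nonpos_Ints_cases')
  show False
  proof (cases m)
    case 0
    then show False using m assms(2) by simp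
  next
    case (Suc j)
    hence e: "b - 1 = - of_nat j - 1" using m by simp
    have "- b = - (b - 1) - 1" by simp
    also have "\<dots> = of_nat j" unfolding e by simp
    finally have "- b = of_nat j" .
    thus False using assms(1) by simp
  qed
qed

lemma np_nz: "(x::complex) \<notin> \<int>\<^sub>\<le>\<^sub>0 \<Longrightarrow> x \<noteq> 0"
  by auto

lemma Gamma_nz: "(x::complex) \<notin> \<int>\<^sub>\<le>\<^sub>0 \<Longrightarrow> Gamma x \<noteq> 0"
  by (simp add: Gamma_eq_zero_iff)

lemma poch_shift:
  fixes x :: complex
  assumes "x \<notin> \<int>\<^sub>\<le>\<^sub>0" "x + of_nat k \<notin> \<int>\<^sub>\<le>\<^sub>0"
  shows "poch x (of_nat k) * (x + of_nat k) = x * poch (x + 1) (of_nat k)"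
proof -
  have g1: "Gamma (x + 1) = x * Gamma x" by (rule Gamma_plus1[OF assms(1)])
  have g2: "Gamma (x + of_nat k + 1) = (x + of_nat k) * Gamma (x + of_nat k)" by (rule Gamma_plus1[OF assms(2)])
  have nz: "Gamma x \<noteq> 0" "x \<noteq> 0" using assms(1) by (auto simp: Gamma_eq_zero_iff)
  have "x + 1 + of_nat k = x + of_nat k + 1" by simp
  thus ?thesis unfolding poch_def using g1 g2 nz by (simp add: field_simps)
qed

lemma poch_succ:
  fixes x :: complex
  assumes "x \<notin> \<int>\<^sub>\<le>\<^sub>0"
  shows "poch x (of_nat (Suc k)) = x * poch (x + 1) (of_nat k)"
proof -
  have g1: "Gamma (x + 1) = x * Gamma x" by (rule Gamma_plus1[OF assms(1)])
  have nz: "Gamma x \<noteq> 0" "x \<noteq> 0" using assms(1) by (auto simp: Gamma_eq_zero_iff)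
  have "x + of_nat (Suc k) = x + 1 + of_nat k" by simp
  thus ?thesis unfolding poch_def using g1 nz by (simp add: field_simps)
qed

lemma poch_zero: "(x::complex) \<notin> \<int>\<^sub>\<le>\<^sub>0 \<Longrightarrow> poch x 0 = 1"
  unfolding poch_def by (simp add: Gamma_eq_zero_iff)

lemma poch_nz:
  fixes x :: complex
  assumes "x \<notin> \<int>\<^sub>\<le>\<^sub>0" "x + of_nat k \<notin> \<int>\<^sub>\<le>\<^sub>0"
  shows "poch x (of_nat k) \<noteq> 0"
  unfolding poch_def using assms by (simp add: Gamma_eq_zero_iff)

lemma Gamma_nat_nz: "Gamma (of_nat k + 1 :: complex) \<noteq> 0"
proof -
  have "(of_nat k + 1 :: complex) = 1 + of_nat k" by simp
  hence "Gamma (of_nat k + 1 :: complex) = fact k" by (simp only: Gamma_fact)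
  thus ?thesis by simp
qed


lemma a_np0: "1 - (a::complex) \<notin> \<nat> \<Longrightarrow> a - 1 \<notin> \<int>\<^sub>\<le>\<^sub>0"
  using a_np[of a 0] by simp

lemma a_np1: "1 - (a::complex) \<notin> \<nat> \<Longrightarrow> a + of_nat k \<notin> \<int>\<^sub>\<le>\<^sub>0"
  using a_np[of a "Suc k"] by (simp add: algebra_simps)

lemma b_np0: "- (b::complex) \<notin> \<nat> \<Longrightarrow> b \<notin> \<int>\<^sub>\<le>\<^sub>0"
  using b_np[of b 0] by simp

lemma PB_nz:
  assumes "\<forall>b\<in>set bs. - b \<notin> \<nat>"
  shows "prod_list (map (\<lambda>b. poch b (of_nat k)) bs) \<noteq> 0"
proof (rule prod_list_map_nz, rule ballI)
  fix b assume "b \<in> set bs"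
  hence "- b \<notin> \<nat>" using assms by blast
  thus "poch b (of_nat k) \<noteq> 0" using poch_nz[OF b_np0 b_np] by blast
qed

lemma frac_helper:
  fixes x y u z :: complex
  assumes "y \<noteq> 0" "z \<noteq> 0" "x * z = u * y"
  shows "x / y = u / z"
  using assms by (simp add: frac_eq_eq)

lemma wt_rel1:
  fixes as bs :: "complex list"
  assumes i: "i < length as" and ac: "1 - as ! i \<notin> \<nat>" and bc: "\<forall>b\<in>set bs. - b \<notin> \<nat>"
  shows "wt (as[i := as ! i - 1]) bs \<eta> k * (of_nat k - (1 - as ! i)) = (as ! i - 1) * wt as bs \<eta> k"
proof -
  define a where "a = as ! i"
  define f where "f x = poch x (of_nat k)" for x
  define PA where "PA = prod_list (map f as)"
  define PA' where "PA' = prod_list (map f (as[i := a - 1]))"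
  define D where "D = Gamma (of_nat k + 1) * prod_list (map (\<lambda>b. poch b (of_nat k)) bs)"
  have Dnz: "D \<noteq> 0" unfolding D_def using PB_nz[OF bc] Gamma_nat_nz by simp
  have u: "PA' * f a = PA * f (a - 1)" unfolding PA_def PA'_def a_def by (rule prod_list_update[OF i])
  have acond: "1 - a \<notin> \<nat>" using ac by (simp add: a_def)
  have sh: "f (a - 1) * (a - 1 + of_nat k) = (a - 1) * f a"
    using poch_shift[OF a_np0[OF acond] a_np[OF acond, of k]] by (simp add: f_def)
  have a0: "a \<notin> \<int>\<^sub>\<le>\<^sub>0" using a_np1[OF acond, of 0] by simp
  have fa: "f a \<noteq> 0" unfolding f_def by (rule poch_nz[OF a0 a_np1[OF acond, of k]])
  have ak: "a - 1 + of_nat k \<noteq> 0" using a_np[OF acond, of k] by (auto simp: np_nz)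
  have "PA' * f a * (a - 1 + of_nat k) = PA * (a - 1) * f a"
    using u sh by (simp add: mult_ac)
  hence key: "PA' * (a - 1 + of_nat k) = PA * (a - 1)" using fa by simp
  have "wt (as[i := a - 1]) bs \<eta> k * (of_nat k - (1 - a)) = PA' / D * \<eta> ^ k * (a - 1 + of_nat k)"
    unfolding wt_def PA'_def D_def f_def by (simp add: algebra_simps)
  also have "\<dots> = (PA' * (a - 1 + of_nat k)) / D * \<eta> ^ k" by (simp add: mult_ac)
  also have "\<dots> = PA * (a - 1) / D * \<eta> ^ k" by (simp only: key)
  also have "\<dots> = (a - 1) * wt as bs \<eta> k"
    unfolding wt_def PA_def D_def f_def by (simp add: mult_ac)
  finally show ?thesis by (simp add: a_def)
qed

lemma wt_rel2:
  fixes as bs :: "complex list"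
  assumes j: "j < length bs" and bc: "\<forall>b\<in>set bs. - b \<notin> \<nat>"
  shows "wt as (bs[j := bs ! j + 1]) \<eta> k * (of_nat k - (- (bs ! j))) = bs ! j * wt as bs \<eta> k"
proof -
  define b where "b = bs ! j"
  define f where "f x = poch x (of_nat k)" for x
  define PA where "PA = prod_list (map (\<lambda>a. poch a (of_nat k)) as)"
  define PB where "PB = prod_list (map f bs)"
  define PB' where "PB' = prod_list (map f (bs[j := b + 1]))"
  define G where "G = Gamma (of_nat k + 1 :: complex)"
  have Gnz: "G \<noteq> 0" unfolding G_def by (rule Gamma_nat_nz)
  have PBnz: "PB \<noteq> 0" unfolding PB_def f_def by (rule PB_nz[OF bc])
  have bcond: "- b \<notin> \<nat>" using bc j by (simp add: b_def)
  have u: "PB' * f b = PB * f (b + 1)" unfolding PB_def PB'_def b_def by (rule prod_list_update[OF j])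
  have sh: "f b * (b + of_nat k) = b * f (b + 1)"
    unfolding f_def by (rule poch_shift[OF b_np0[OF bcond] b_np[OF bcond]])
  have fb: "f b \<noteq> 0" unfolding f_def by (rule poch_nz[OF b_np0[OF bcond] b_np[OF bcond]])
  have bnz: "b \<noteq> 0" using b_np0[OF bcond] by (auto simp: np_nz)
  have bk: "b + of_nat k \<noteq> 0" using b_np[OF bcond, of k] by (auto simp: np_nz)
  have "PB' * f b * b = PB * f b * (b + of_nat k)" using u sh by (simp add: mult_ac)
  hence key0: "PB' * b = PB * (b + of_nat k)" using fb by simp
  have PB'nz: "PB' \<noteq> 0" using key0 PBnz bk by auto
  have "wt as (bs[j := b + 1]) \<eta> k * (of_nat k - (- b)) = PA / (G * PB') * \<eta> ^ k * (b + of_nat k)"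
    unfolding wt_def PA_def PB'_def G_def f_def by (simp add: algebra_simps)
  also have "\<dots> = (PA * \<eta> ^ k * (b + of_nat k)) / (G * PB')" by simp
  also have "\<dots> = (b * PA * \<eta> ^ k) / (G * PB)"
  proof (rule frac_helper)
    show "G * PB' \<noteq> 0" "G * PB \<noteq> 0" using Gnz PBnz PB'nz by auto
    have "b * PA * \<eta> ^ k * (G * PB') = PA * \<eta> ^ k * G * (PB' * b)" by (simp only: mult_ac)
    also have "\<dots> = PA * \<eta> ^ k * G * (PB * (b + of_nat k))" by (simp only: key0)
    also have "\<dots> = PA * \<eta> ^ k * (b + of_nat k) * (G * PB)" by (simp only: mult_ac)
    finally show "PA * \<eta> ^ k * (b + of_nat k) * (G * PB) = b * PA * \<eta> ^ k * (G * PB')" by (rule sym)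
  qed
  also have "\<dots> = b * (PA / (G * PB) * \<eta> ^ k)" by simp
  also have "\<dots> = b * wt as bs \<eta> k"
    unfolding wt_def PA_def PB_def G_def f_def by simp
  finally show ?thesis by (simp add: b_def)
qed

lemma wt_rel3:
  fixes as bs :: "complex list"
  assumes ac: "\<forall>a\<in>set as. 1 - a \<notin> \<nat>" and bc: "\<forall>b\<in>set bs. - b \<notin> \<nat>"
    and b1: "prod_list (map (\<lambda>b. b - 1) bs) \<noteq> 0"
  shows "wt (map (\<lambda>a. a - 1) as) (map (\<lambda>b. b - 1) bs) \<eta> (Suc k) * (of_nat k + 1)
     = (\<eta> * prod_list (map (\<lambda>a. a - 1) as) / prod_list (map (\<lambda>b. b - 1) bs)) * wt as bs \<eta> k"
    and "wt (map (\<lambda>a. a - 1) as) (map (\<lambda>b. b - 1) bs) \<eta> 0 = 1"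
proof -
  have bne1: "b \<noteq> 1" if "b \<in> set bs" for b
  proof
    assume "b = 1"
    hence "(0::complex) \<in> set (map (\<lambda>b. b - 1) bs)" using that by force
    thus False using b1 by (simp add: prod_list_zero_iff)
  qed
  define PA1 where "PA1 = prod_list (map (\<lambda>a. a - 1) as)"
  define PB1 where "PB1 = prod_list (map (\<lambda>b. b - 1) bs)"
  define PA where "PA = prod_list (map (\<lambda>a. poch a (of_nat k)) as)"
  define PB where "PB = prod_list (map (\<lambda>b. poch b (of_nat k)) bs)"
  define G where "G = Gamma (of_nat k + 1 :: complex)"
  have Gnz: "G \<noteq> 0" unfolding G_def by (rule Gamma_nat_nz)
  have PBnz: "PB \<noteq> 0" unfolding PB_def by (rule PB_nz[OF bc])
  have PB1nz: "PB1 \<noteq> 0" unfolding PB1_def by (rule b1)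
  have k1: "(of_nat k + 1 :: complex) \<noteq> 0" by (rule of_nat_p1_nz)
  have eA: "prod_list (map (\<lambda>a. poch a (of_nat (Suc k))) (map (\<lambda>a. a - 1) as)) = PA1 * PA"
  proof -
    have e: "map (\<lambda>a. poch (a - 1) (of_nat (Suc k))) as = map (\<lambda>a. (a - 1) * poch a (of_nat k)) as"
    proof (rule map_cong[OF refl])
      fix a assume "a \<in> set as"
      hence "1 - a \<notin> \<nat>" using ac by blast
      thus "poch (a - 1) (of_nat (Suc k)) = (a - 1) * poch a (of_nat k)"
        using poch_succ[OF a_np0, of a k] by simp
    qed
    show ?thesis unfolding PA1_def PA_def by (simp only: map_map o_def e prod_list_map_mult)
  qed
  have eB: "prod_list (map (\<lambda>b. poch b (of_nat (Suc k))) (map (\<lambda>b. b - 1) bs)) = PB1 * PB"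
  proof -
    have e: "map (\<lambda>b. poch (b - 1) (of_nat (Suc k))) bs = map (\<lambda>b. (b - 1) * poch b (of_nat k)) bs"
    proof (rule map_cong[OF refl])
      fix b assume b: "b \<in> set bs"
      hence "- b \<notin> \<nat>" using bc by blast
      hence "b - 1 \<notin> \<int>\<^sub>\<le>\<^sub>0" using bne1[OF b] by (rule b1_np)
      thus "poch (b - 1) (of_nat (Suc k)) = (b - 1) * poch b (of_nat k)"
        using poch_succ[of "b - 1" k] by simp
    qed
    show ?thesis unfolding PB1_def PB_def by (simp only: map_map o_def e prod_list_map_mult)
  qed
  have eG: "Gamma (of_nat (Suc k) + 1 :: complex) = (of_nat k + 1) * G"
  proof -
    have "(of_nat (Suc k) + 1 :: complex) = 1 + of_nat (Suc k)" by simp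
    hence "Gamma (of_nat (Suc k) + 1 :: complex) = fact (Suc k)" by (simp only: Gamma_fact)
    also have "\<dots> = (of_nat k + 1) * fact k" by (simp add: algebra_simps)
    also have "fact k = G"
    proof -
      have "(of_nat k + 1 :: complex) = 1 + of_nat k" by simp
      thus ?thesis unfolding G_def by (simp only: Gamma_fact)
    qed
    finally show ?thesis .
  qed
  have "wt (map (\<lambda>a. a - 1) as) (map (\<lambda>b. b - 1) bs) \<eta> (Suc k) * (of_nat k + 1)
      = PA1 * PA / ((of_nat k + 1) * G * (PB1 * PB)) * \<eta> ^ Suc k * (of_nat k + 1)"
    unfolding wt_def eA eB eG ..
  also have "\<dots> = (PA1 * PA * \<eta> ^ Suc k * (of_nat k + 1)) / ((of_nat k + 1) * G * (PB1 * PB))"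
    by (simp only: times_divide_eq_left)
  also have "\<dots> = (\<eta> * PA1 * (PA * \<eta> ^ k)) / (G * PB * PB1)"
  proof (rule frac_helper)
    show "(of_nat k + 1) * G * (PB1 * PB) \<noteq> 0" using k1 Gnz PB1nz PBnz by simp
    show "G * PB * PB1 \<noteq> 0" using Gnz PB1nz PBnz by simp
    show "PA1 * PA * \<eta> ^ Suc k * (of_nat k + 1) * (G * PB * PB1) =
      \<eta> * PA1 * (PA * \<eta> ^ k) * ((of_nat k + 1) * G * (PB1 * PB))"
      by (simp only: power_Suc mult_ac)
  qed
  also have "\<dots> = (\<eta> * PA1 / PB1) * (PA / (G * PB) * \<eta> ^ k)"
    by (simp only: times_divide_eq_left times_divide_eq_right divide_divide_eq_left mult_ac)
  also have "\<dots> = (\<eta> * prod_list (map (\<lambda>a. a - 1) as) / prod_list (map (\<lambda>b. b - 1) bs)) * wt as bs \<eta> k"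
    unfolding wt_def PA1_def PB1_def PA_def PB_def G_def ..
  finally show "wt (map (\<lambda>a. a - 1) as) (map (\<lambda>b. b - 1) bs) \<eta> (Suc k) * (of_nat k + 1)
     = (\<eta> * prod_list (map (\<lambda>a. a - 1) as) / prod_list (map (\<lambda>b. b - 1) bs)) * wt as bs \<eta> k" .
  have oA: "prod_list (map (\<lambda>a. poch a (of_nat 0)) (map (\<lambda>a. a - 1) as)) = 1"
  proof -
    have "\<forall>a\<in>set (map (\<lambda>a. a - 1) as). poch a (of_nat 0) = 1"
    proof
      fix x assume "x \<in> set (map (\<lambda>a. a - 1) as)"
      then obtain a where a: "a \<in> set as" "x = a - 1" by auto
      have "1 - a \<notin> \<nat>" using ac a(1) by blast
      hence "x \<notin> \<int>\<^sub>\<le>\<^sub>0" using a(2) a_np0 by simp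
      thus "poch x (of_nat 0) = 1" using poch_zero by simp
    qed
    thus ?thesis by (rule prod_list_map_one)
  qed
  have oB: "prod_list (map (\<lambda>b. poch b (of_nat 0)) (map (\<lambda>b. b - 1) bs)) = 1"
  proof -
    have "\<forall>b\<in>set (map (\<lambda>b. b - 1) bs). poch b (of_nat 0) = 1"
    proof
      fix x assume "x \<in> set (map (\<lambda>b. b - 1) bs)"
      then obtain b where b: "b \<in> set bs" "x = b - 1" by auto
      have "- b \<notin> \<nat>" using bc b(1) by blast
      hence "b - 1 \<notin> \<int>\<^sub>\<le>\<^sub>0" using bne1[OF b(1)] by (rule b1_np)
      hence "x \<notin> \<int>\<^sub>\<le>\<^sub>0" using b(2) by simp
      thus "poch x (of_nat 0) = 1" using poch_zero by simp
    qed
    thus ?thesis by (rule prod_list_map_one)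
  qed
  show "wt (map (\<lambda>a. a - 1) as) (map (\<lambda>b. b - 1) bs) \<eta> 0 = 1"
    using oA oB unfolding wt_def by simp
qed


lemma poly_shift_m1: "poly [:-1, 1:] (z::complex) = z - 1" by simp

theorem mainTheorem6:
  fixes as bs :: "complex list" and \<eta> :: complex and n :: nat
  defines "w \<equiv> wt as bs \<eta>"
    and "Ups \<equiv> \<eta> * prod_list (map (\<lambda>a. a - 1) as) / prod_list (map (\<lambda>b. b - 1) bs)"
  assumes n: "n \<ge> 1"
    and a_cond: "\<forall>i < length as. 1 - as ! i \<notin> \<nat>"
    and b_cond: "\<forall>j < length bs. - (bs ! j) \<notin> \<nat>"
    and good: "good_weight w"
    and good_i: "\<forall>i < length as. good_weight (wt (as[i := as ! i - 1]) bs \<eta>)"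
    and good_j: "\<forall>j < length bs. good_weight (wt as (bs[j := bs ! j + 1]) \<eta>)"
    and good_T: "good_weight (wt (map (\<lambda>a. a - 1) as) (map (\<lambda>b. b - 1) bs) \<eta>)"
    and den_i: "\<forall>i < length as. Qfun w (n - 1) (1 - as ! i) \<noteq> 0"
    and den_j: "\<forall>j < length bs. Qfun w (n - 1) (- (bs ! j)) \<noteq> 0"
    and den_b: "prod_list (map (\<lambda>b. b - 1) bs) \<noteq> 0"
    and den_T: "Ups * Qfun w (n - 1) (-1) - poly (OP w (n - 1)) (-1) \<noteq> 0"
  shows "(\<forall>i < length as. \<forall>z.
            poly (OP (wt (as[i := as ! i - 1]) bs \<eta>) n) z =
            poly (OP w n) z - Qfun w n (1 - as ! i) / Qfun w (n - 1) (1 - as ! i)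
                               * poly (OP w (n - 1)) z)
       \<and> (\<forall>j < length bs. \<forall>z.
            poly (OP (wt as (bs[j := bs ! j + 1]) \<eta>) n) z =
            poly (OP w n) z - Qfun w n (- (bs ! j)) / Qfun w (n - 1) (- (bs ! j))
                               * poly (OP w (n - 1)) z)
       \<and> (\<forall>z.
            poly (OP (wt (map (\<lambda>a. a - 1) as) (map (\<lambda>b. b - 1) bs) \<eta>) n) z =
            poly (OP w n) (z - 1)
              - (Ups * Qfun w n (-1) - poly (OP w n) (-1))
                / (Ups * Qfun w (n - 1) (-1) - poly (OP w (n - 1)) (-1))
                * poly (OP w (n - 1)) (z - 1))"
proof -
  have gw: "good_weight w" by (rule good)
  have sw: "summ w" by (rule good_summ[OF gw])
  have M: "is_MOPS w (OP w)" by (rule OP_MOPS[OF gw])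
  have dn: "degree (OP w n) = n" "lead_coeff (OP w n) = 1" by (rule MOPS_fam[OF M])+
  have dm: "degree (OP w (n - 1)) < n" using MOPS_fam(1)[OF M, of "n - 1"] n by simp
  have bc: "\<forall>b\<in>set bs. - b \<notin> \<nat>"
  proof
    fix b assume "b \<in> set bs"
    then obtain j where "j < length bs" "b = bs ! j" by (auto simp: in_set_conv_nth)
    thus "- b \<notin> \<nat>" using b_cond by simp
  qed
  have ac: "\<forall>a\<in>set as. 1 - a \<notin> \<nat>"
  proof
    fix a assume "a \<in> set as"
    then obtain i where "i < length as" "a = as ! i" by (auto simp: in_set_conv_nth)
    thus "1 - a \<notin> \<nat>" using a_cond by simp
  qed
  have zN: "z \<noteq> of_nat k" if "z \<notin> \<nat>" for z :: complex and k
    using that of_nat_in_Nats[of k] by auto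
  have P1: "\<forall>i < length as. \<forall>z.
            poly (OP (wt (as[i := as ! i - 1]) bs \<eta>) n) z =
            poly (OP w n) z - Qfun w n (1 - as ! i) / Qfun w (n - 1) (1 - as ! i)
                               * poly (OP w (n - 1)) z"
  proof (intro allI impI)
    fix i z assume i: "i < length as"
    define w1 where "w1 = wt (as[i := as ! i - 1]) bs \<eta>"
    define c where "c = Qfun w n (1 - as ! i) / Qfun w (n - 1) (1 - as ! i)"
    have g1: "good_weight w1" unfolding w1_def using good_i i by blast
    have acond: "1 - as ! i \<notin> \<nat>" using a_cond i by blast
    have rel: "w1 k * (of_nat k - (1 - as ! i)) = (as ! i - 1) * w k" for k
      unfolding w1_def w_def by (rule wt_rel1[OF i acond bc])
    have zn: "1 - as ! i \<noteq> of_nat k" for k by (rule zN[OF acond])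
    have den: "Qfun w (n - 1) (1 - as ! i) \<noteq> 0" using den_i i by blast
    have o: "orth w1 (OP w n - Polynomial.smult c (OP w (n - 1))) n"
      unfolding c_def by (rule geronimus[OF gw good_summ[OF g1] n rel zn den])
    have m: "degree (OP w n - Polynomial.smult c (OP w (n - 1))) = n \<and>
             lead_coeff (OP w n - Polynomial.smult c (OP w (n - 1))) = 1"
      by (rule monic_sub[OF dn dm])
    have "OP w1 n = OP w n - Polynomial.smult c (OP w (n - 1))"
      using OP_char[OF g1 _ _ o] m by blast
    thus "poly (OP (wt (as[i := as ! i - 1]) bs \<eta>) n) z =
            poly (OP w n) z - Qfun w n (1 - as ! i) / Qfun w (n - 1) (1 - as ! i)
                               * poly (OP w (n - 1)) z"
      unfolding w1_def c_def by simp
  qed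
  have P2: "\<forall>j < length bs. \<forall>z.
            poly (OP (wt as (bs[j := bs ! j + 1]) \<eta>) n) z =
            poly (OP w n) z - Qfun w n (- (bs ! j)) / Qfun w (n - 1) (- (bs ! j))
                               * poly (OP w (n - 1)) z"
  proof (intro allI impI)
    fix j z assume j: "j < length bs"
    define w1 where "w1 = wt as (bs[j := bs ! j + 1]) \<eta>"
    define c where "c = Qfun w n (- (bs ! j)) / Qfun w (n - 1) (- (bs ! j))"
    have g1: "good_weight w1" unfolding w1_def using good_j j by blast
    have bcond: "- (bs ! j) \<notin> \<nat>" using b_cond j by blast
    have rel: "w1 k * (of_nat k - (- (bs ! j))) = (bs ! j) * w k" for k
      unfolding w1_def w_def by (rule wt_rel2[OF j bc])
    have zn: "- (bs ! j) \<noteq> of_nat k" for k by (rule zN[OF bcond])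
    have den: "Qfun w (n - 1) (- (bs ! j)) \<noteq> 0" using den_j j by blast
    have o: "orth w1 (OP w n - Polynomial.smult c (OP w (n - 1))) n"
      unfolding c_def by (rule geronimus[OF gw good_summ[OF g1] n rel zn den])
    have m: "degree (OP w n - Polynomial.smult c (OP w (n - 1))) = n \<and>
             lead_coeff (OP w n - Polynomial.smult c (OP w (n - 1))) = 1"
      by (rule monic_sub[OF dn dm])
    have "OP w1 n = OP w n - Polynomial.smult c (OP w (n - 1))"
      using OP_char[OF g1 _ _ o] m by blast
    thus "poly (OP (wt as (bs[j := bs ! j + 1]) \<eta>) n) z =
            poly (OP w n) z - Qfun w n (- (bs ! j)) / Qfun w (n - 1) (- (bs ! j))
                               * poly (OP w (n - 1)) z"
      unfolding w1_def c_def by simp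
  qed
  have P3: "\<forall>z.
            poly (OP (wt (map (\<lambda>a. a - 1) as) (map (\<lambda>b. b - 1) bs) \<eta>) n) z =
            poly (OP w n) (z - 1)
              - (Ups * Qfun w n (-1) - poly (OP w n) (-1))
                / (Ups * Qfun w (n - 1) (-1) - poly (OP w (n - 1)) (-1))
                * poly (OP w (n - 1)) (z - 1)"
  proof
    fix z
    define w1 where "w1 = wt (map (\<lambda>a. a - 1) as) (map (\<lambda>b. b - 1) bs) \<eta>"
    define c where "c = (Ups * Qfun w n (-1) - poly (OP w n) (-1))
                / (Ups * Qfun w (n - 1) (-1) - poly (OP w (n - 1)) (-1))"
    define A where "A = pcompose (OP w n) [:-1, 1:]"
    define B where "B = pcompose (OP w (n - 1)) [:-1, 1:]"
    have g1: "good_weight w1" unfolding w1_def by (rule good_T)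
    have rel: "w1 (Suc k) * (of_nat k + 1) = Ups * w k" for k
      unfolding w1_def w_def Ups_def by (rule wt_rel3(1)[OF ac bc den_b])
    have w0: "w1 0 = 1" unfolding w1_def by (rule wt_rel3(2)[OF ac bc den_b])
    have o: "orth w1 (A - Polynomial.smult c B) n"
      unfolding c_def A_def B_def by (rule geronimus3[OF gw good_summ[OF g1] n w0 rel den_T])
    have dA: "degree A = n" unfolding A_def by (simp add: degree_pcompose dn)
    have lA: "lead_coeff A = 1"
    proof -
      have "lead_coeff A = lead_coeff (OP w n) * lead_coeff [:-1, 1::complex:] ^ degree (OP w n)"
        unfolding A_def by (rule lead_coeff_comp) simp
      thus ?thesis using dn by simp
    qed
    have dB: "degree B < n" unfolding B_def using dm by (simp add: degree_pcompose)
    have m: "degree (A - Polynomial.smult c B) = n \<and> lead_coeff (A - Polynomial.smult c B) = 1"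
      by (rule monic_sub[OF dA lA dB])
    have "OP w1 n = A - Polynomial.smult c B"
      using OP_char[OF g1 _ _ o] m by blast
    thus "poly (OP (wt (map (\<lambda>a. a - 1) as) (map (\<lambda>b. b - 1) bs) \<eta>) n) z =
            poly (OP w n) (z - 1)
              - (Ups * Qfun w n (-1) - poly (OP w n) (-1))
                / (Ups * Qfun w (n - 1) (-1) - poly (OP w (n - 1)) (-1))
                * poly (OP w (n - 1)) (z - 1)"
      unfolding w1_def c_def A_def B_def
      by (simp only: poly_diff poly_smult poly_pcompose poly_shift_m1)
  qed
  show ?thesis using P1 P2 P3 by blast
qed

end
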